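(* Let $U_0>0$, $\omega_f\in\mathbb{R}$ and $h$ the Heaviside function. Consider $v_x'(x,y,z,t) = h(t)\int_0^t \sin[x+y+z-U_0(t-\tau)]\sin\omega_f\tau\,d\tau$, $v_y' = 0$, $v_z'(x,y,z,t) = -h(t)\int_0^t\sin[x+y+z-U_0(t-\tau)]\sin\omega_f\tau\,d\tau$, $p'=0$ (the pointwise solution of the forced linearized Euler system given by Duhamel's formula with $f_1=f_2=f_3=0$, $f_4(\xi)=\sin\xi$, $k_4=l_4=m_4=1$). Then there is no function $\Phi(x,y,z,t)$ with $v_x' = \partial\Phi/\partial x$, $v_y' = \partial\Phi/\partial y$, $v_z' = \partial\Phi/\partial z$, i.e. no velocity potential exists for this solution.
   Context: The forced linearized Euler system is $\partial_t v_x' + U_0\partial_x v_x' + \frac1{\rho_0}\partial_x p' = h(t)F\sin\omega_f t$, $\partial_t v_y' + U_0\partial_x v_y' + \frac1{\rho_0}\partial_y p' = h(t)G\sin\omega_f t$, $\partial_t v_z' + U_0\partial_x v_z' + \frac1{\rho_0}\partial_z p' = h(t)H\sin\omega_f t$, $\partial_t p' + U_0\partial_xp' + \rho_0c_0^2(\partial_xv_x'+\partial_yv_y'+\partial_zv_z') = h(t)P\sin\omega_f t$; here $F = \sin(x+y+z)$, $G=0$, $H=-\sin(x+y+z)$, $P=0$. *)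

theory Defs
  imports "HOL-Analysis.Analysis"
begin

definition heaviside :: "real \<Rightarrow> real" where
  "heaviside t = (if t \<ge> 0 then 1 else 0)"

definition duhamel_I :: "real \<Rightarrow> real \<Rightarrow> real \<Rightarrow> real \<Rightarrow> real \<Rightarrow> real \<Rightarrow> real" where
  "duhamel_I U0 omf x y z t =
     heaviside t * integral {0..t} (\<lambda>\<tau>. sin (x + y + z - U0 * (t - \<tau>)) * sin (omf * \<tau>))"

definition vx' :: "real \<Rightarrow> real \<Rightarrow> real \<Rightarrow> real \<Rightarrow> real \<Rightarrow> real \<Rightarrow> real" where
  "vx' U0 omf x y z t = duhamel_I U0 omf x y z t"

definition vy' :: "real \<Rightarrow> real \<Rightarrow> real \<Rightarrow> real \<Rightarrow> real \<Rightarrow> real \<Rightarrow> real" where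
  "vy' U0 omf x y z t = 0"

definition vz' :: "real \<Rightarrow> real \<Rightarrow> real \<Rightarrow> real \<Rightarrow> real \<Rightarrow> real \<Rightarrow> real" where
  "vz' U0 omf x y z t = - duhamel_I U0 omf x y z t"

end

theory Submission
  imports Defs
begin

theorem proposition8:
  fixes U0 omf :: real
  assumes "U0 > 0" and "omf \<noteq> 0"
  shows "\<not> (\<exists>\<Phi> :: real \<Rightarrow> real \<Rightarrow> real \<Rightarrow> real \<Rightarrow> real.
            \<forall>x y z t.
              ((\<lambda>a. \<Phi> a y z t) has_real_derivative vx' U0 omf x y z t) (at x) \<and>
              ((\<lambda>b. \<Phi> x b z t) has_real_derivative vy' U0 omf x y z t) (at y) \<and>
              ((\<lambda>c. \<Phi> x y c t) has_real_derivative vz' U0 omf x y z t) (at z))"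
proof
  assume "\<exists>\<Phi> :: real \<Rightarrow> real \<Rightarrow> real \<Rightarrow> real \<Rightarrow> real.
            \<forall>x y z t.
              ((\<lambda>a. \<Phi> a y z t) has_real_derivative vx' U0 omf x y z t) (at x) \<and>
              ((\<lambda>b. \<Phi> x b z t) has_real_derivative vy' U0 omf x y z t) (at y) \<and>
              ((\<lambda>c. \<Phi> x y c t) has_real_derivative vz' U0 omf x y z t) (at z)"
  then obtain \<Phi> :: "real \<Rightarrow> real \<Rightarrow> real \<Rightarrow> real \<Rightarrow> real" where
    H: "\<And>x y z t. ((\<lambda>a. \<Phi> a y z t) has_real_derivative vx' U0 omf x y z t) (at x) \<and>
              ((\<lambda>b. \<Phi> x b z t) has_real_derivative vy' U0 omf x y z t) (at y) \<and>
              ((\<lambda>c. \<Phi> x y c t) has_real_derivative vz' U0 omf x y z t) (at z)"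
    by blast
  have indep: "\<Phi> x y z t = \<Phi> x 0 z t" for x y z t
  proof -
    have "\<forall>b. ((\<lambda>b. \<Phi> x b z t) has_real_derivative 0) (at b)"
      using H by (simp add: vy'_def)
    then show ?thesis by (rule DERIV_isconst_all)
  qed
  have same: "vx' U0 omf x y z t = vx' U0 omf x 0 z t" for x y z t
  proof -
    have "((\<lambda>a. \<Phi> a y z t) has_real_derivative vx' U0 omf x 0 z t) (at x)"
    proof -
      have "(\<lambda>a. \<Phi> a y z t) = (\<lambda>a. \<Phi> a 0 z t)" using indep by auto
      then show ?thesis using H[where x=x and y=0 and z=z and t=t] by simp
    qed
    then show ?thesis using H[where x=x and y=y and z=z and t=t] DERIV_unique by blast
  qed
  define t0 where "t0 = pi / (2 * (U0 + \<bar>omf\<bar>))"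
  have aw: "\<bar>omf\<bar> > 0" using assms by simp
  have t0pos: "t0 > 0" unfolding t0_def using assms aw by simp
  define J where "J s = integral {0..t0} (\<lambda>\<tau>. sin (s - U0 * (t0 - \<tau>)) * sin (omf * \<tau>))" for s
  have JI: "J s = duhamel_I U0 omf 0 s 0 t0" for s
    unfolding J_def duhamel_I_def heaviside_def using t0pos by simp
  have Jc: "J s = J 0" for s
    using same[where x=0 and y=s and z=0 and t=t0] unfolding JI vx'_def by simp
  have Jpi: "J (s + pi) = - J s" for s
  proof -
    have "J (s + pi) = integral {0..t0} (\<lambda>\<tau>. - (sin (s - U0 * (t0 - \<tau>)) * sin (omf * \<tau>)))"
      unfolding J_def
    proof (rule arg_cong[where f="integral {0..t0}"], rule ext)
      fix \<tau>
      have "s + pi - U0 * (t0 - \<tau>) = (s - U0 * (t0 - \<tau>)) + pi" by simp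
      then have "sin (s + pi - U0 * (t0 - \<tau>)) = - sin (s - U0 * (t0 - \<tau>))"
        by (simp only: sin_periodic_pi)
      then show "sin (s + pi - U0 * (t0 - \<tau>)) * sin (omf * \<tau>) = - (sin (s - U0 * (t0 - \<tau>)) * sin (omf * \<tau>))"
        by simp
    qed
    also have "\<dots> = - J s" unfolding J_def by (rule integral_neg)
    finally show ?thesis .
  qed
  have J0: "J (U0 * t0) = 0"
    using Jpi[of "U0 * t0"] Jc[of "U0*t0"] Jc[of "U0*t0 + pi"] by simp
  define f where "f \<tau> = sin (U0 * \<tau>) * (omf * sin (omf * \<tau>))" for \<tau>
  have fcont: "continuous_on {0..t0} f" unfolding f_def by (intro continuous_intros)
  have "integral {0..t0} f = omf * J (U0 * t0)"
  proof -
    have "integral {0..t0} f = integral {0..t0} (\<lambda>\<tau>. omf * (sin (U0 * t0 - U0 * (t0 - \<tau>)) * sin (omf * \<tau>)))"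
      unfolding f_def by (rule arg_cong[where f="integral {0..t0}"]) (auto simp: algebra_simps)
    also have "\<dots> = omf * J (U0 * t0)" unfolding J_def by (rule integral_mult_right)
    finally show ?thesis .
  qed
  with J0 have int0: "integral {0..t0} f = 0" by simp
  have hi: "(f has_integral 0) (cbox 0 t0)"
    using integrable_integral[OF integrable_continuous_real[OF fcont]] int0 by simp
  have Ut: "U0 * t0 < pi" and Ot: "\<bar>omf\<bar> * t0 < pi"
  proof -
    have "U0 * t0 = pi * (U0 / (2 * (U0 + \<bar>omf\<bar>)))" unfolding t0_def by simp
    moreover have "U0 / (2 * (U0 + \<bar>omf\<bar>)) < 1" using assms aw by (simp add: field_simps)
    ultimately show "U0 * t0 < pi" using pi_gt_zero by (metis mult_less_cancel_left_pos mult.right_neutral)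
    have "\<bar>omf\<bar> * t0 = pi * (\<bar>omf\<bar> / (2 * (U0 + \<bar>omf\<bar>)))" unfolding t0_def by simp
    moreover have "\<bar>omf\<bar> / (2 * (U0 + \<bar>omf\<bar>)) < 1" using assms aw by (simp add: field_simps)
    ultimately show "\<bar>omf\<bar> * t0 < pi" using pi_gt_zero by (metis mult_less_cancel_left_pos mult.right_neutral)
  qed
  have om: "omf * sin (omf * \<tau>) > 0" if "0 < \<tau>" "\<tau> \<le> t0" for \<tau>
  proof -
    have a: "0 < \<bar>omf\<bar> * \<tau>" using aw that by simp
    have "\<bar>omf\<bar> * \<tau> \<le> \<bar>omf\<bar> * t0" using that aw by (intro mult_left_mono) auto
    then have b: "\<bar>omf\<bar> * \<tau> < pi" using Ot by linarith
    have s: "sin (\<bar>omf\<bar> * \<tau>) > 0" using a b by (rule sin_gt_zero)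
    show ?thesis
    proof (cases "omf > 0")
      case True then show ?thesis using s by simp
    next
      case False then have "omf < 0" using assms by simp
      then show ?thesis using s by (simp add: mult_neg_neg)
    qed
  qed
  have su: "sin (U0 * \<tau>) > 0" if "0 < \<tau>" "\<tau> \<le> t0" for \<tau>
  proof -
    have "U0 * \<tau> \<le> U0 * t0" using that assms by (intro mult_left_mono) auto
    then have "U0 * \<tau> < pi" using Ut by linarith
    then show ?thesis using assms that by (intro sin_gt_zero) auto
  qed
  have fpos: "f \<tau> > 0" if "0 < \<tau>" "\<tau> \<le> t0" for \<tau>
    unfolding f_def using om[OF that] su[OF that] by simp
  have "f t0 = 0"
  proof (rule has_integral_0_cbox_imp_0[OF _ _ hi])
    show "continuous_on (cbox 0 t0) f" using fcont by simp
    show "0 \<le> f x" if "x \<in> box 0 t0" for x using fpos[of x] that by (simp add: less_imp_le)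
    show "box 0 t0 \<noteq> {}" using t0pos by simp
    show "t0 \<in> cbox 0 t0" using t0pos by simp
  qed
  then show False using fpos[of t0] t0pos by simp
qed

end
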